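(* For $\alpha\in[0,1]$ and $r>0$ let $$h(r,\alpha):=2\sqrt{\frac{2(1-\alpha/2)r}{1+\alpha+(1-\alpha/2)r}+\frac{r}{1+r}}+3-\frac{1}{r^2(1+r)}.$$ For each $\alpha\in(0,1)$ the equation $h(r,\alpha)=0$ has a unique positive root $r=r_{\star}(\alpha)$, and, denoting by $r_\star(0)$ and $r_\star(1)$ the positive roots of $h(r,0)=0$ and $h(r,1)=0$, it holds that $0.3865\approx r_{\star}(0)< r_{\star}(\alpha)< r_{\star}(1)\approx0.4037$ for all $\alpha\in(0,1)$. *)

theory Defs
  imports Complex_Main
begin

definition h :: "real \<Rightarrow> real \<Rightarrow> real" where
  "h r \<alpha> = 2 * sqrt (2 * (1 - \<alpha>/2) * r / (1 + \<alpha> + (1 - \<alpha>/2) * r) + r / (1 + r))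
              + 3 - 1 / (r^2 * (1 + r))"

end

theory Submission
  imports Defs
begin

lemma inner_mono:
  fixes a b r s :: real
  assumes "a > 0" "b > 0" "0 < r" "r < s"
  shows "r / (b + a*r) \<le> s / (b + a*s)"
proof -
  have "r * (b + a*s) \<le> s * (b + a*r)" using assms by (simp add: algebra_simps)
  moreover have "0 < b + a*r" "0 < b + a*s" using assms by (simp_all add: add_pos_pos)
  ultimately show ?thesis by (simp add: field_simps)
qed

lemma h_mono:
  assumes "0 \<le> \<alpha>" "\<alpha> \<le> 1" "0 < r" "r < s"
  shows "h r \<alpha> < h s \<alpha>"
proof -
  have a: "(1 - \<alpha>/2) > 0" "1 + \<alpha> > 0" using assms by auto
  have 1: "r / (1 + \<alpha> + (1 - \<alpha>/2) * r) \<le> s / (1 + \<alpha> + (1 - \<alpha>/2) * s)"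
    using inner_mono[OF a(1) a(2) assms(3,4)] .
  have 2: "r / (1 + r) \<le> s / (1+s)" using inner_mono[of 1 1 r s] assms by simp
  have 3: "2 * (1 - \<alpha>/2) * r / (1 + \<alpha> + (1 - \<alpha>/2) * r) + r / (1 + r)
        \<le> 2 * (1 - \<alpha>/2) * s / (1 + \<alpha> + (1 - \<alpha>/2) * s) + s / (1 + s)"
  proof -
    have "2 * (1 - \<alpha>/2) * r / (1 + \<alpha> + (1 - \<alpha>/2) * r) = (2 * (1 - \<alpha>/2)) * (r / (1 + \<alpha> + (1 - \<alpha>/2) * r))" by simp
    moreover have "2 * (1 - \<alpha>/2) * s / (1 + \<alpha> + (1 - \<alpha>/2) * s) = (2 * (1 - \<alpha>/2)) * (s / (1 + \<alpha> + (1 - \<alpha>/2) * s))" by simp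
    moreover have "(2 * (1 - \<alpha>/2)) * (r / (1 + \<alpha> + (1 - \<alpha>/2) * r)) \<le> (2 * (1 - \<alpha>/2)) * (s / (1 + \<alpha> + (1 - \<alpha>/2) * s))"
      using 1 a by (intro mult_left_mono) auto
    ultimately show ?thesis using 2 by linarith
  qed
  have 4: "r^2 * (1 + r) < s^2 * (1+s)"
    using assms by (intro mult_strict_mono power_strict_mono) auto
  have 5: "1 / (s^2 * (1 + s)) < 1 / (r^2 * (1 + r))"
    using 4 assms by (intro divide_strict_left_mono) auto
  show ?thesis unfolding h_def using real_sqrt_le_mono[OF 3] 5 by linarith
qed

lemma frac_cmp:
  fixes a b c d :: real
  assumes "0 < c" "0 < d"
  shows "a * d < b * c \<Longrightarrow> a / c < b / d"
  using assms by (simp add: field_simps)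

lemma h_anti:
  assumes "0 \<le> \<alpha>" "\<alpha> < \<beta>" "\<beta> \<le> 1" "0 < r"
  shows "h r \<beta> < h r \<alpha>"
proof -
  have "(1 - \<alpha>/2) * r > 0" "(1 - \<beta>/2) * r > 0" using assms by (intro mult_pos_pos; simp)+
  then have p: "1 + \<alpha> + (1 - \<alpha>/2) * r > 0" "1 + \<beta> + (1 - \<beta>/2) * r > 0" using assms by linarith+
  have e1: "(1 - \<beta>/2) * (1 + \<alpha>) = 1 + \<alpha> - \<beta>/2 - \<alpha>*\<beta>/2" by (simp add: algebra_simps)
  have e2: "(1 - \<alpha>/2) * (1 + \<beta>) = 1 + \<beta> - \<alpha>/2 - \<alpha>*\<beta>/2" by (simp add: algebra_simps)
  have k: "(1 - \<beta>/2) * (1 + \<alpha>) < (1 - \<alpha>/2) * (1 + \<beta>)" unfolding e1 e2 using assms by linarith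
  have "(1 - \<beta>/2) * r * (1 + \<alpha> + (1 - \<alpha>/2) * r) < (1 - \<alpha>/2) * r * (1 + \<beta> + (1 - \<beta>/2) * r)"
  proof -
    have "r * ((1 - \<beta>/2) * (1 + \<alpha>)) < r * ((1 - \<alpha>/2) * (1 + \<beta>))" using k assms by simp
    moreover have "(1 - \<beta>/2) * r * (1 + \<alpha> + (1 - \<alpha>/2) * r) = r * ((1 - \<beta>/2) * (1 + \<alpha>)) + (1-\<beta>/2)*(1-\<alpha>/2)*r*r"
      by (simp add: algebra_simps)
    moreover have "(1 - \<alpha>/2) * r * (1 + \<beta> + (1 - \<beta>/2) * r) = r * ((1 - \<alpha>/2) * (1 + \<beta>)) + (1-\<beta>/2)*(1-\<alpha>/2)*r*r"
      by (simp add: algebra_simps)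
    ultimately show ?thesis by (metis add_strict_right_mono)
  qed
  then have "2 * ((1 - \<beta>/2) * r * (1 + \<alpha> + (1 - \<alpha>/2) * r)) < 2 * ((1 - \<alpha>/2) * r * (1 + \<beta> + (1 - \<beta>/2) * r))"
    by linarith
  then have "(2 * (1 - \<beta>/2) * r) * (1 + \<alpha> + (1 - \<alpha>/2) * r) < (2 * (1 - \<alpha>/2) * r) * (1 + \<beta> + (1 - \<beta>/2) * r)"
    by (simp only: mult.assoc)
  then have "2 * (1 - \<beta>/2) * r / (1 + \<beta> + (1 - \<beta>/2) * r) < 2 * (1 - \<alpha>/2) * r / (1 + \<alpha> + (1 - \<alpha>/2) * r)"
    using frac_cmp[OF p(2) p(1)] by blast
  then have "sqrt (2 * (1 - \<beta>/2) * r / (1 + \<beta> + (1 - \<beta>/2) * r) + r/(1+r)) < sqrt (2 * (1 - \<alpha>/2) * r / (1 + \<alpha> + (1 - \<alpha>/2) * r) + r/(1+r))"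
    by (intro real_sqrt_less_mono) linarith
  then show ?thesis unfolding h_def by linarith
qed

lemma h_low: assumes "0 \<le> \<alpha>" "\<alpha> \<le> 1" shows "h (3/10) \<alpha> < 0"
proof -
  have "h (3/10) \<alpha> \<le> h (3/10) 0"
    using h_anti[of 0 \<alpha> "3/10"] assms by (cases "\<alpha> = 0") auto
  moreover have "sqrt (9/13) < sqrt 1" by (intro real_sqrt_less_mono) simp
  then have "sqrt (9/13) < 1" by simp
  moreover have "h (3/10) 0 = 2 * sqrt (9/13) + 3 - 1000/117"
    unfolding h_def by (simp add: power2_eq_square)
  ultimately show ?thesis by linarith
qed

lemma h_high: assumes "0 \<le> \<alpha>" "\<alpha> \<le> 1" shows "h 1 \<alpha> > 0"
proof -
  have "2*(1-\<alpha>/2)*1/(1+\<alpha>+(1-\<alpha>/2)*1) \<ge> 0" using assms by (intro divide_nonneg_nonneg) auto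
  then have "sqrt (2*(1-\<alpha>/2)*1/(1+\<alpha>+(1-\<alpha>/2)*1) + 1/(1+1)) \<ge> 0" by simp
  moreover have "h 1 \<alpha> = 2 * sqrt (2*(1-\<alpha>/2)*1/(1+\<alpha>+(1-\<alpha>/2)*1) + 1/(1+1)) + 3 - 1/2"
    unfolding h_def by simp
  ultimately show ?thesis by linarith
qed

lemma h_cont: assumes "0 \<le> \<alpha>" "\<alpha> \<le> 1" shows "continuous_on {3/10..1} (\<lambda>r. h r \<alpha>)"
proof -
  have "\<forall>r\<in>{3/10..1::real}. 1 + \<alpha> + (1 - \<alpha>/2) * r \<noteq> 0 \<and> 1 + r \<noteq> 0 \<and> r^2 * (1+r) \<noteq> 0"
  proof
    fix r :: real assume "r \<in> {3/10..1}"
    then have r: "r > 0" by simp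
    have "(1 - \<alpha>/2) * r > 0" using assms r by (intro mult_pos_pos) auto
    then show "1 + \<alpha> + (1 - \<alpha>/2) * r \<noteq> 0 \<and> 1 + r \<noteq> 0 \<and> r^2 * (1+r) \<noteq> 0"
    proof (intro conjI)
      show "1 + \<alpha> + (1 - \<alpha>/2) * r \<noteq> 0" using \<open>(1 - \<alpha>/2) * r > 0\<close> assms by linarith
      show "1 + r \<noteq> 0" using r by linarith
      have "r^2 * (1+r) > 0" using r by simp
      then show "r^2 * (1+r) \<noteq> 0" by linarith
    qed
  qed
  then show ?thesis unfolding h_def
    by (intro continuous_intros) auto
qed

lemma h_root: assumes "0 \<le> \<alpha>" "\<alpha> \<le> 1" shows "\<exists>!r. r > 0 \<and> h r \<alpha> = 0"
proof -
  obtain x where x: "3/10 \<le> x" "x \<le> 1" "h x \<alpha> = 0"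
    using IVT'[of "\<lambda>r. h r \<alpha>" "3/10" 0 1] h_low[OF assms] h_high[OF assms] h_cont[OF assms]
    by force
  show ?thesis
  proof (rule ex1I[of _ x])
    show "x > 0 \<and> h x \<alpha> = 0" using x by auto
  next
    fix y assume y: "y > 0 \<and> h y \<alpha> = 0"
    show "y = x"
    proof (rule ccontr)
      assume "y \<noteq> x"
      then have "y < x \<or> x < y" by auto
      then show False using h_mono[OF assms, of y x] h_mono[OF assms, of x y] x y by auto
    qed
  qed
qed

theorem lemma2p1:
  shows "(\<forall>\<alpha>::real. 0 < \<alpha> \<and> \<alpha> < 1 \<longrightarrow> (\<exists>!r::real. r > 0 \<and> h r \<alpha> = 0))
       \<and> (\<exists>!r::real. r > 0 \<and> h r 0 = 0)
       \<and> (\<exists>!r::real. r > 0 \<and> h r 1 = 0)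
       \<and> (\<forall>\<alpha> r0 ra r1 :: real. 0 < \<alpha> \<and> \<alpha> < 1
             \<and> r0 > 0 \<and> h r0 0 = 0 \<and> ra > 0 \<and> h ra \<alpha> = 0 \<and> r1 > 0 \<and> h r1 1 = 0
             \<longrightarrow> r0 < ra \<and> ra < r1)"
proof (intro conjI allI impI)
  fix \<alpha> :: real assume "0 < \<alpha> \<and> \<alpha> < 1"
  then show "\<exists>!r::real. r > 0 \<and> h r \<alpha> = 0" by (intro h_root) auto
next
  show "\<exists>!r::real. r > 0 \<and> h r 0 = 0" by (intro h_root) auto
next
  show "\<exists>!r::real. r > 0 \<and> h r 1 = 0" by (intro h_root) auto
next
  fix \<alpha> r0 ra r1 :: real
  assume A: "0 < \<alpha> \<and> \<alpha> < 1
             \<and> r0 > 0 \<and> h r0 0 = 0 \<and> ra > 0 \<and> h ra \<alpha> = 0 \<and> r1 > 0 \<and> h r1 1 = 0"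
  have "h ra \<alpha> < h ra 0" using h_anti[of 0 \<alpha> ra] A by auto
  show "r0 < ra" proof (rule ccontr)
    assume "\<not> r0 < ra" then have "ra < r0 \<or> ra = r0" by auto
    then show False using h_mono[of 0 ra r0] A \<open>h ra \<alpha> < h ra 0\<close> by auto
  qed
  have "h r1 1 < h r1 \<alpha>" using h_anti[of \<alpha> 1 r1] A by auto
  show "ra < r1" proof (rule ccontr)
    assume "\<not> ra < r1" then have "r1 < ra \<or> ra = r1" by auto
    then show False using h_mono[of \<alpha> r1 ra] A \<open>h r1 1 < h r1 \<alpha>\<close> by auto
  qed
qed

end
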